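(* Let $\Gamma=(\mathcal{A},\Theta,p,c)$ be a basic game that is a potential game whose potential $\Phi_\theta$ is convex for every $\theta$, and let $\mathcal{I}=(\gamma,\mathcal{T},\pi)$ be an information structure. Define, for interim flow profiles $\hat y$, $\Phi_\pi(\hat y)=\sum_{\theta\in\Theta}\sum_{\tau\in\mathcal{T}}p(\theta)\pi(\tau\mid\theta)\Phi_\theta(y(\tau))$. Then for every $\alpha>0$, every Bayesian Wardrop $\alpha$-equilibrium $\hat y$ of $(\Gamma,\mathcal{I})$ satisfies $\Phi_\pi(\hat y)\le\min_{\hat z}\Phi_\pi(\hat z)+\alpha$, where the minimum is over all interim flow profiles $\hat z$.
   Context: Basic game: $\Gamma=(\mathcal{A},\Theta,p,c)$ with $\mathcal{A}$ a finite set of actions, $\Theta$ a finite set of states, $p\in\Delta(\Theta)$ a full-support prior, and $c=(c_a)_{a\in\mathcal{A}}$ with each $c_a:\mathcal{Y}\times\Theta\to\mathbb{R}$ continuous, where $\mathcal{Y}=\Delta(\mathcal{A})=\{y\in\mathbb{R}^{\mathcal{A}}_{\ge0}:\sum_a y_a=1\}$. For $\gamma>0$, $\Delta_\gamma(\mathcal{A})=\{y\in\mathbb{R}^{\mathcal{A}}_{\ge0}:\sum_a y_a=\gamma\}$. $\Gamma$ is a potential game if for each $\theta$ there is an open set $\widetilde{\mathcal{Y}}\supseteq\mathcal{Y}$ in $\mathbb{R}^{\mathcal{A}}$ and a continuously differentiable $\Phi_\theta:\widetilde{\mathcal{Y}}\to\mathbb{R}$ with $\partial\Phi_\theta(y)/\partial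 y_a=c_a(y,\theta)$ for all $a$ and $y\in\mathcal{Y}$. Information structure: $\mathcal{I}=(\gamma,\mathcal{T},\pi)$ consisting of a finite set $\mathcal{K}$ of populations with sizes $\gamma^k>0$, $\sum_k\gamma^k=1$; finite type sets $\mathcal{T}^k$, $\mathcal{T}=\prod_k\mathcal{T}^k$; and $\pi:\Theta\to\Delta(\mathcal{T})$. An interim flow profile is $\hat y=(y^k(\tau^k))_{k,\tau^k}$ with $y^k(\tau^k)\in\Delta_{\gamma^k}(\mathcal{A})$; total flow $y(\tau)=\sum_k y^k(\tau^k)$. Let $P(\tau^k)=\sum_\theta\sum_{\tau^{-k}}p(\theta)\pi(\tau^k,\tau^{-k}\mid\theta)$. For $\varepsilon\ge0$, $\hat y$ is a Bayesian Wardrop $\varepsilon$-equilibrium of $(\Gamma,\mathcal{I})$ if for all $k$, all $\tau^k$ with $P(\tau^k)>0$ and all $a,b$ with $y^k_a(\tau^k)>0$: $\sum_\theta\sum_{\tau^{-k}}p(\theta)\pi(\tau^k,\tau^{-k}\mid\theta)c_a(y(\tau),\theta)\le\sum_\theta\sum_{\tau^{-k}}p(\theta)\pi(\tau^k,\tau^{-k}\mid\theta)c_b(y(\tau),\theta)+\varepsilon P(\tau^k)$. *)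

theory Defs
  imports "HOL-Analysis.Analysis"
begin

definition simplex_mass :: "real \<Rightarrow> (real ^ 'a::finite) set" where
  "simplex_mass g = {y. (\<forall>a. 0 \<le> y $ a) \<and> (\<Sum>a\<in>UNIV. y $ a) = g}"

definition basic_game :: "('s::finite \<Rightarrow> real) \<Rightarrow> ('a::finite \<Rightarrow> real ^ 'a \<Rightarrow> 's \<Rightarrow> real) \<Rightarrow> bool" where
  "basic_game p c \<longleftrightarrow> (\<forall>\<theta>. 0 < p \<theta>) \<and> (\<Sum>\<theta>\<in>UNIV. p \<theta>) = 1 \<and>
     (\<forall>a \<theta>. continuous_on (simplex_mass 1) (\<lambda>y. c a y \<theta>))"

definition is_potential :: "('a::finite \<Rightarrow> real ^ 'a \<Rightarrow> 's \<Rightarrow> real) \<Rightarrow> ('s \<Rightarrow> real ^ 'a \<Rightarrow> real) \<Rightarrow> bool" where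
  "is_potential c \<Phi> \<longleftrightarrow> (\<forall>\<theta>. \<exists>U DPhi. open U \<and> simplex_mass 1 \<subseteq> U \<and>
      (\<forall>y\<in>U. (\<Phi> \<theta> has_derivative (\<lambda>h. DPhi y \<bullet> h)) (at y)) \<and>
      continuous_on U DPhi \<and>
      (\<forall>y\<in>simplex_mass 1. \<forall>a. DPhi y $ a = c a y \<theta>))"

definition info_structure :: "('k::finite \<Rightarrow> real) \<Rightarrow> ('k \<Rightarrow> 't set) \<Rightarrow> ('s \<Rightarrow> ('k \<Rightarrow> 't) \<Rightarrow> real) \<Rightarrow> bool" where
  "info_structure \<gamma> T \<pi> \<longleftrightarrow> (\<forall>k. 0 < \<gamma> k) \<and> (\<Sum>k\<in>UNIV. \<gamma> k) = 1 \<and> (\<forall>k. finite (T k)) \<and>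
     (\<forall>\<theta>. (\<forall>\<tau>\<in>PiE UNIV T. 0 \<le> \<pi> \<theta> \<tau>) \<and> (\<Sum>\<tau>\<in>PiE UNIV T. \<pi> \<theta> \<tau>) = 1)"

definition interim_profile :: "('k \<Rightarrow> real) \<Rightarrow> ('k \<Rightarrow> 't set) \<Rightarrow> ('k \<Rightarrow> 't \<Rightarrow> real ^ 'a::finite) \<Rightarrow> bool" where
  "interim_profile \<gamma> T yh \<longleftrightarrow> (\<forall>k. \<forall>t\<in>T k. yh k t \<in> simplex_mass (\<gamma> k))"

definition total_flow :: "('k::finite \<Rightarrow> 't \<Rightarrow> real ^ 'a::finite) \<Rightarrow> ('k \<Rightarrow> 't) \<Rightarrow> real ^ 'a" where
  "total_flow yh \<tau> = (\<Sum>k\<in>UNIV. yh k (\<tau> k))"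

text \<open>P(\<tau>^k): the sum over \<tau>^{-k} is rendered as a sum over full profiles with k-th entry t.\<close>
definition type_prob :: "('s::finite \<Rightarrow> real) \<Rightarrow> ('k \<Rightarrow> 't set) \<Rightarrow> ('s \<Rightarrow> ('k \<Rightarrow> 't) \<Rightarrow> real) \<Rightarrow> 'k \<Rightarrow> 't \<Rightarrow> real" where
  "type_prob p T \<pi> k t = (\<Sum>\<theta>\<in>UNIV. \<Sum>\<tau>\<in>{\<tau>\<in>PiE UNIV T. \<tau> k = t}. p \<theta> * \<pi> \<theta> \<tau>)"

definition interim_cost :: "('s::finite \<Rightarrow> real) \<Rightarrow> ('a::finite \<Rightarrow> real ^ 'a \<Rightarrow> 's \<Rightarrow> real) \<Rightarrow>
    ('k::finite \<Rightarrow> 't set) \<Rightarrow> ('s \<Rightarrow> ('k \<Rightarrow> 't) \<Rightarrow> real) \<Rightarrow> ('k \<Rightarrow> 't \<Rightarrow> real ^ 'a) \<Rightarrow> 'k \<Rightarrow> 't \<Rightarrow> 'a \<Rightarrow> real" where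
  "interim_cost p c T \<pi> yh k t a =
     (\<Sum>\<theta>\<in>UNIV. \<Sum>\<tau>\<in>{\<tau>\<in>PiE UNIV T. \<tau> k = t}. p \<theta> * \<pi> \<theta> \<tau> * c a (total_flow yh \<tau>) \<theta>)"

definition bayes_wardrop_eq ::
  "('s::finite \<Rightarrow> real) \<Rightarrow> ('a::finite \<Rightarrow> real ^ 'a \<Rightarrow> 's \<Rightarrow> real) \<Rightarrow> ('k::finite \<Rightarrow> real) \<Rightarrow>
   ('k \<Rightarrow> 't set) \<Rightarrow> ('s \<Rightarrow> ('k \<Rightarrow> 't) \<Rightarrow> real) \<Rightarrow> real \<Rightarrow> ('k \<Rightarrow> 't \<Rightarrow> real ^ 'a) \<Rightarrow> bool" where
  "bayes_wardrop_eq p c \<gamma> T \<pi> \<epsilon> yh \<longleftrightarrow> interim_profile \<gamma> T yh \<and>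
     (\<forall>k. \<forall>t\<in>T k. type_prob p T \<pi> k t > 0 \<longrightarrow>
        (\<forall>a b. yh k t $ a > 0 \<longrightarrow>
           interim_cost p c T \<pi> yh k t a \<le> interim_cost p c T \<pi> yh k t b + \<epsilon> * type_prob p T \<pi> k t))"

definition Phi_pi :: "('s::finite \<Rightarrow> real) \<Rightarrow> ('k::finite \<Rightarrow> 't set) \<Rightarrow> ('s \<Rightarrow> ('k \<Rightarrow> 't) \<Rightarrow> real) \<Rightarrow>
    ('s \<Rightarrow> real ^ 'a::finite \<Rightarrow> real) \<Rightarrow> ('k \<Rightarrow> 't \<Rightarrow> real ^ 'a) \<Rightarrow> real" where
  "Phi_pi p T \<pi> \<Phi> yh = (\<Sum>\<theta>\<in>UNIV. \<Sum>\<tau>\<in>PiE UNIV T. p \<theta> * \<pi> \<theta> \<tau> * \<Phi> \<theta> (total_flow yh \<tau>))"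

end

theory Submission
  imports Defs
begin

lemma grad_ineq:
  fixes f :: "'v::real_normed_vector \<Rightarrow> real"
  assumes cvx: "convex_on S f" and y: "y\<in>S" and z: "z\<in>S" and d: "(f has_derivative f') (at y)"
  shows "f' (z - y) \<le> f z - f y"
proof -
  define h where "h = z - y"
  define g where "g = (\<lambda>s::real. f (y + s *\<^sub>R h))"
  have lin: "bounded_linear f'" using d by (rule has_derivative_bounded_linear)
  have d1: "((\<lambda>s::real. y + s *\<^sub>R h) has_derivative (\<lambda>s. s *\<^sub>R h)) (at 0)"
    by (auto intro!: derivative_eq_intros)
  have d2: "(f has_derivative f') (at ((\<lambda>s::real. y + s *\<^sub>R h) 0))" using d by simp
  have "(((f \<circ> (\<lambda>s::real. y + s *\<^sub>R h))) has_derivative (f' \<circ> (\<lambda>s. s *\<^sub>R h))) (at 0)"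
    by (rule diff_chain_at[OF d1 d2])
  moreover have "(f' \<circ> (\<lambda>s. s *\<^sub>R h)) = (\<lambda>s. s * f' h)"
    using lin by (auto simp: fun_eq_iff linear_simps bounded_linear.linear linear_cmul)
  ultimately have "(g has_derivative (\<lambda>s. f' h * s)) (at 0)" by (simp add: g_def o_def mult.commute)
  hence "(g has_field_derivative f' h) (at 0 within {0<..})"
    unfolding has_field_derivative_def
    by (rule has_derivative_at_withinI)
  hence lim: "((\<lambda>s. (g s - g 0) / (s - 0)) \<longlongrightarrow> f' h) (at 0 within {0<..})"
    by (simp add: has_field_derivative_iff)
  have ev: "eventually (\<lambda>s. (g s - g 0) / (s - 0) \<le> f z - f y) (at 0 within {0<..})"
  proof -
    have "eventually (\<lambda>s. s \<in> {0<..<1}) (at_right (0::real))"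
      by (rule eventually_at_right_real) simp
    thus ?thesis
    proof eventually_elim
      case (elim s)
      hence s: "0 < s" "s < 1" by auto
      have "g s = f ((1 - s) *\<^sub>R y + s *\<^sub>R z)"
        by (simp add: g_def h_def algebra_simps)
      also have "\<dots> \<le> (1 - s) * f y + s * f z"
        using convex_onD[OF cvx, of s y z] s y z by simp
      finally have "g s - g 0 \<le> s * (f z - f y)" by (simp add: g_def algebra_simps)
      thus ?case using s by (simp add: divide_simps mult.commute)
    qed
  qed
  have "f' h \<le> f z - f y"
    by (rule tendsto_upperbound[OF lim ev]) simp
  thus ?thesis by (simp add: h_def)
qed

lemma local_bound:
  fixes y z :: "real^'a::finite" and C :: "'a \<Rightarrow> real"
  assumes y: "y \<in> simplex_mass g" and z: "z \<in> simplex_mass g"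
    and eq: "\<forall>a b. y$a > 0 \<longrightarrow> C a \<le> C b + e"
  shows "(\<Sum>a\<in>UNIV. (y$a - z$a) * C a) \<le> g * e"
proof -
  have "Min (range C) \<in> range C" by (rule Min_in) auto
  then obtain b where "C b = Min (range C)" by (metis imageE)
  then have b: "\<forall>a. C b \<le> C a" by simp
  have "(\<Sum>a\<in>UNIV. y$a * C a) \<le> (\<Sum>a\<in>UNIV. y$a * (C b + e))"
  proof (rule sum_mono)
    fix a
    have "0 \<le> y$a" using y by (simp add: simplex_mass_def)
    show "y$a * C a \<le> y$a * (C b + e)"
    proof (cases "y$a > 0")
      case True then show ?thesis using eq by (simp add: mult_left_mono)
    next
      case False then have "y$a = 0" using \<open>0 \<le> y$a\<close> by simp
      then show ?thesis by simp
    qed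
  qed
  also have "\<dots> = g * (C b + e)" using y by (simp add: simplex_mass_def sum_distrib_right[symmetric])
  finally have 1: "(\<Sum>a\<in>UNIV. y$a * C a) \<le> g * (C b + e)" .
  have "(\<Sum>a\<in>UNIV. z$a * C a) \<ge> (\<Sum>a\<in>UNIV. z$a * C b)"
    using z b by (intro sum_mono) (simp add: simplex_mass_def mult_left_mono)
  also have "(\<Sum>a\<in>UNIV. z$a * C b) = g * C b" using z by (simp add: simplex_mass_def sum_distrib_right[symmetric])
  finally have 2: "g * C b \<le> (\<Sum>a\<in>UNIV. z$a * C a)" .
  have "(\<Sum>a\<in>UNIV. (y$a - z$a) * C a) = (\<Sum>a\<in>UNIV. y$a * C a) - (\<Sum>a\<in>UNIV. z$a * C a)"
    by (simp add: left_diff_distrib sum_subtractf)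
  with 1 2 show ?thesis by (simp add: algebra_simps)
qed

lemma simplex_sum:
  fixes yv :: "'k::finite \<Rightarrow> real^'a::finite"
  assumes "\<And>k. yv k \<in> simplex_mass (g k)"
  shows "(\<Sum>k\<in>UNIV. yv k) \<in> simplex_mass (\<Sum>k\<in>UNIV. g k)"
proof -
  have "(\<Sum>a\<in>UNIV. (\<Sum>k\<in>UNIV. yv k) $ a) = (\<Sum>k\<in>UNIV. \<Sum>a\<in>UNIV. yv k $ a)"
    unfolding sum_component by (rule sum.swap)
  also have "\<dots> = (\<Sum>k\<in>UNIV. g k)" using assms by (simp add: simplex_mass_def)
  finally show ?thesis using assms by (auto simp: simplex_mass_def sum_component intro!: sum_nonneg)
qed

lemma swap3:
  fixes f :: "'x \<Rightarrow> 'y \<Rightarrow> 'z \<Rightarrow> real"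
  shows "(\<Sum>\<theta>\<in>A. \<Sum>\<tau>\<in>B. \<Sum>a\<in>C. f \<theta> \<tau> a * d a) = (\<Sum>a\<in>C. d a * (\<Sum>\<theta>\<in>A. \<Sum>\<tau>\<in>B. f \<theta> \<tau> a))"
proof -
  have "(\<Sum>\<theta>\<in>A. \<Sum>\<tau>\<in>B. \<Sum>a\<in>C. f \<theta> \<tau> a * d a) = (\<Sum>\<theta>\<in>A. \<Sum>a\<in>C. \<Sum>\<tau>\<in>B. f \<theta> \<tau> a * d a)"
    by (rule sum.cong[OF refl], rule sum.swap)
  also have "\<dots> = (\<Sum>a\<in>C. \<Sum>\<theta>\<in>A. \<Sum>\<tau>\<in>B. f \<theta> \<tau> a * d a)"
    by (rule sum.swap)
  also have "\<dots> = (\<Sum>a\<in>C. d a * (\<Sum>\<theta>\<in>A. \<Sum>\<tau>\<in>B. f \<theta> \<tau> a))"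
    by (simp add: sum_distrib_left mult.commute)
  finally show ?thesis .
qed

lemma group_k:
  assumes "finite A" "finite Tk" "\<And>\<tau>. \<tau> \<in> A \<Longrightarrow> \<tau> k \<in> Tk"
  shows "(\<Sum>\<tau>\<in>A. G \<tau> (\<tau> k)) = (\<Sum>t\<in>Tk. \<Sum>\<tau>\<in>{\<tau>\<in>A. \<tau> k = t}. G \<tau> t)"
proof -
  have "(\<Sum>\<tau>\<in>A. G \<tau> (\<tau> k)) = (\<Sum>t\<in>Tk. \<Sum>\<tau>\<in>{\<tau>\<in>A. \<tau> k = t}. G \<tau> (\<tau> k))"
    using assms by (intro sum.group[symmetric]) auto
  also have "\<dots> = (\<Sum>t\<in>Tk. \<Sum>\<tau>\<in>{\<tau>\<in>A. \<tau> k = t}. G \<tau> t)"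
    by (intro sum.cong refl) auto
  finally show ?thesis .
qed

theorem mainTheorem6:
  fixes p :: "'s::finite \<Rightarrow> real"
    and c :: "'a::finite \<Rightarrow> real ^ 'a \<Rightarrow> 's \<Rightarrow> real"
    and \<Phi> :: "'s \<Rightarrow> real ^ 'a \<Rightarrow> real"
    and \<gamma> :: "'k::finite \<Rightarrow> real"
    and T :: "'k \<Rightarrow> 't set"
    and \<pi> :: "'s \<Rightarrow> ('k \<Rightarrow> 't) \<Rightarrow> real"
    and \<alpha> :: real
    and yh :: "'k \<Rightarrow> 't \<Rightarrow> real ^ 'a"
  assumes "basic_game p c"
    and "is_potential c \<Phi>"
    and "\<forall>\<theta>. convex_on (simplex_mass 1) (\<Phi> \<theta>)"
    and "info_structure \<gamma> T \<pi>"
    and "\<alpha> > 0"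
    and "bayes_wardrop_eq p c \<gamma> T \<pi> \<alpha> yh"
  shows "\<forall>zh. interim_profile \<gamma> T zh \<longrightarrow> Phi_pi p T \<pi> \<Phi> yh \<le> Phi_pi p T \<pi> \<Phi> zh + \<alpha>"
proof (intro allI impI)
  fix zh :: "'k \<Rightarrow> 't \<Rightarrow> real ^ 'a" assume zh: "interim_profile \<gamma> T zh"
  have p_pos: "\<And>\<theta>. 0 < p \<theta>" and p_sum: "(\<Sum>\<theta>\<in>UNIV. p \<theta>) = 1"
    using assms(1) unfolding basic_game_def by auto
  have gsum: "(\<Sum>k\<in>UNIV. \<gamma> k) = 1" and finT: "\<And>k. finite (T k)"
    and pinn: "\<And>\<theta> \<tau>. \<tau> \<in> PiE UNIV T \<Longrightarrow> 0 \<le> \<pi> \<theta> \<tau>"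
    and psum: "\<And>\<theta>. (\<Sum>\<tau>\<in>PiE UNIV T. \<pi> \<theta> \<tau>) = 1"
    using assms(4) unfolding info_structure_def by auto
  define A where "A = PiE UNIV T"
  have finA: "finite A" unfolding A_def by (intro finite_PiE) (auto simp: finT)
  have Ak: "\<And>\<tau> k. \<tau> \<in> A \<Longrightarrow> \<tau> k \<in> T k" unfolding A_def by auto
  have yh: "interim_profile \<gamma> T yh"
    and eqm: "\<And>k t a b. t \<in> T k \<Longrightarrow> type_prob p T \<pi> k t > 0 \<Longrightarrow> yh k t $ a > 0 \<Longrightarrow>
           interim_cost p c T \<pi> yh k t a \<le> interim_cost p c T \<pi> yh k t b + \<alpha> * type_prob p T \<pi> k t"
    using assms(6) unfolding bayes_wardrop_eq_def by auto
  have "\<forall>\<theta>. \<exists>DP. (\<forall>y\<in>simplex_mass 1. (\<Phi> \<theta> has_derivative (\<lambda>h. DP y \<bullet> h)) (at y)) \<and>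
      (\<forall>y\<in>simplex_mass 1. \<forall>a. DP y $ a = c a y \<theta>)"
    using assms(2) unfolding is_potential_def by blast
  then obtain DP where DP: "\<And>\<theta> y. y \<in> simplex_mass 1 \<Longrightarrow> (\<Phi> \<theta> has_derivative (\<lambda>h. DP \<theta> y \<bullet> h)) (at y)"
      "\<And>\<theta> y a. y \<in> simplex_mass 1 \<Longrightarrow> DP \<theta> y $ a = c a y \<theta>"
    by metis
  have flow: "\<And>xh \<tau>. interim_profile \<gamma> T xh \<Longrightarrow> \<tau> \<in> A \<Longrightarrow> total_flow xh \<tau> \<in> simplex_mass 1"
  proof -
    fix xh \<tau> assume xh: "interim_profile \<gamma> T xh" and t: "\<tau> \<in> A"
    have "(\<Sum>k\<in>UNIV. xh k (\<tau> k)) \<in> simplex_mass (\<Sum>k\<in>UNIV. \<gamma> k)"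
      using xh Ak[OF t] by (intro simplex_sum) (auto simp: interim_profile_def)
    then show "total_flow xh \<tau> \<in> simplex_mass 1" by (simp add: total_flow_def gsum)
  qed
  define d where "d k t a = yh k t $ a - zh k t $ a" for k t a
  define W where "W \<theta> \<tau> = p \<theta> * \<pi> \<theta> \<tau>" for \<theta> \<tau>
  have Wnn: "\<And>\<theta> \<tau>. \<tau> \<in> A \<Longrightarrow> 0 \<le> W \<theta> \<tau>"
    unfolding W_def A_def using p_pos pinn by (simp add: less_imp_le)
  have stepA: "\<And>\<theta> \<tau>. \<tau> \<in> A \<Longrightarrow> \<Phi> \<theta> (total_flow yh \<tau>) - \<Phi> \<theta> (total_flow zh \<tau>) \<le>
      (\<Sum>k\<in>UNIV. \<Sum>a\<in>UNIV. c a (total_flow yh \<tau>) \<theta> * d k (\<tau> k) a)"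
  proof -
    fix \<theta> \<tau> assume t: "\<tau> \<in> A"
    define Y where "Y = total_flow yh \<tau>"
    define Z where "Z = total_flow zh \<tau>"
    have Y: "Y \<in> simplex_mass 1" unfolding Y_def by (rule flow[OF yh t])
    have Z: "Z \<in> simplex_mass 1" unfolding Z_def by (rule flow[OF zh t])
    have "DP \<theta> Y \<bullet> (Z - Y) \<le> \<Phi> \<theta> Z - \<Phi> \<theta> Y"
      using grad_ineq[OF assms(3)[rule_format] Y Z DP(1)[OF Y]] by simp
    hence "\<Phi> \<theta> Y - \<Phi> \<theta> Z \<le> DP \<theta> Y \<bullet> (Y - Z)"
      by (simp add: inner_diff_right)
    also have "DP \<theta> Y \<bullet> (Y - Z) = (\<Sum>a\<in>UNIV. c a Y \<theta> * (\<Sum>k\<in>UNIV. d k (\<tau> k) a))"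
      unfolding inner_vec_def using DP(2)[OF Y]
      by (simp add: Y_def Z_def total_flow_def sum_component d_def sum_subtractf)
    also have "\<dots> = (\<Sum>a\<in>UNIV. \<Sum>k\<in>UNIV. c a Y \<theta> * d k (\<tau> k) a)"
      by (simp add: sum_distrib_left)
    also have "\<dots> = (\<Sum>k\<in>UNIV. \<Sum>a\<in>UNIV. c a Y \<theta> * d k (\<tau> k) a)"
      by (rule sum.swap)
    finally show "\<Phi> \<theta> (total_flow yh \<tau>) - \<Phi> \<theta> (total_flow zh \<tau>) \<le>
      (\<Sum>k\<in>UNIV. \<Sum>a\<in>UNIV. c a (total_flow yh \<tau>) \<theta> * d k (\<tau> k) a)"
      by (simp add: Y_def Z_def)
  qed
  define X where "X \<theta> \<tau> a = W \<theta> \<tau> * c a (total_flow yh \<tau>) \<theta>" for \<theta> \<tau> a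
  have "Phi_pi p T \<pi> \<Phi> yh - Phi_pi p T \<pi> \<Phi> zh =
      (\<Sum>\<theta>\<in>UNIV. \<Sum>\<tau>\<in>A. W \<theta> \<tau> * (\<Phi> \<theta> (total_flow yh \<tau>) - \<Phi> \<theta> (total_flow zh \<tau>)))"
    unfolding Phi_pi_def A_def W_def by (simp add: sum_subtractf right_diff_distrib)
  also have "\<dots> \<le> (\<Sum>\<theta>\<in>UNIV. \<Sum>\<tau>\<in>A. W \<theta> \<tau> * (\<Sum>k\<in>UNIV. \<Sum>a\<in>UNIV. c a (total_flow yh \<tau>) \<theta> * d k (\<tau> k) a))"
    by (intro sum_mono mult_left_mono stepA Wnn)
  also have "\<dots> = (\<Sum>\<theta>\<in>UNIV. \<Sum>\<tau>\<in>A. \<Sum>k\<in>UNIV. \<Sum>a\<in>UNIV. X \<theta> \<tau> a * d k (\<tau> k) a)"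
    by (simp add: sum_distrib_left X_def mult.assoc)
  also have "\<dots> = (\<Sum>\<theta>\<in>UNIV. \<Sum>k\<in>UNIV. \<Sum>\<tau>\<in>A. \<Sum>a\<in>UNIV. X \<theta> \<tau> a * d k (\<tau> k) a)"
    by (rule sum.cong[OF refl], rule sum.swap)
  also have "\<dots> = (\<Sum>k\<in>UNIV. \<Sum>\<theta>\<in>UNIV. \<Sum>\<tau>\<in>A. \<Sum>a\<in>UNIV. X \<theta> \<tau> a * d k (\<tau> k) a)"
    by (rule sum.swap)
  also have "\<dots> \<le> (\<Sum>k\<in>UNIV. \<gamma> k * \<alpha> * (\<Sum>t\<in>T k. type_prob p T \<pi> k t))"
  proof (rule sum_mono)
    fix k
    have "(\<Sum>\<theta>\<in>UNIV. \<Sum>\<tau>\<in>A. \<Sum>a\<in>UNIV. X \<theta> \<tau> a * d k (\<tau> k) a) =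
        (\<Sum>\<theta>\<in>UNIV. \<Sum>t\<in>T k. \<Sum>\<tau>\<in>{\<tau>\<in>A. \<tau> k = t}. \<Sum>a\<in>UNIV. X \<theta> \<tau> a * d k t a)"
      by (rule sum.cong[OF refl], rule group_k[OF finA finT Ak])
    also have "\<dots> = (\<Sum>t\<in>T k. \<Sum>\<theta>\<in>UNIV. \<Sum>\<tau>\<in>{\<tau>\<in>A. \<tau> k = t}. \<Sum>a\<in>UNIV. X \<theta> \<tau> a * d k t a)"
      by (rule sum.swap)
    also have "\<dots> = (\<Sum>t\<in>T k. \<Sum>a\<in>UNIV. d k t a * interim_cost p c T \<pi> yh k t a)"
      unfolding interim_cost_def X_def W_def A_def by (rule sum.cong[OF refl], rule swap3)
    also have "\<dots> \<le> (\<Sum>t\<in>T k. \<gamma> k * (\<alpha> * type_prob p T \<pi> k t))"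
    proof (rule sum_mono)
      fix t assume tk: "t \<in> T k"
      have Pnn: "0 \<le> type_prob p T \<pi> k t"
        unfolding type_prob_def using Wnn unfolding W_def A_def by (intro sum_nonneg) auto
      show "(\<Sum>a\<in>UNIV. d k t a * interim_cost p c T \<pi> yh k t a) \<le> \<gamma> k * (\<alpha> * type_prob p T \<pi> k t)"
      proof (cases "type_prob p T \<pi> k t > 0")
        case True
        have "(\<Sum>a\<in>UNIV. (yh k t $ a - zh k t $ a) * interim_cost p c T \<pi> yh k t a) \<le> \<gamma> k * (\<alpha> * type_prob p T \<pi> k t)"
          using yh zh tk eqm[OF tk True] by (intro local_bound) (auto simp: interim_profile_def)
        then show ?thesis by (simp add: d_def)
      next
        case False
        hence P0: "type_prob p T \<pi> k t = 0" using Pnn by simp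
        have "\<forall>\<theta>\<in>UNIV. (\<Sum>\<tau>\<in>{\<tau>\<in>A. \<tau> k = t}. W \<theta> \<tau>) = 0"
          using P0 unfolding type_prob_def W_def[symmetric] A_def[symmetric]
          by (subst sum_nonneg_eq_0_iff[symmetric]) (auto intro!: sum_nonneg Wnn simp: finA)
        hence "\<And>\<theta> \<tau>. \<tau> \<in> {\<tau>\<in>A. \<tau> k = t} \<Longrightarrow> W \<theta> \<tau> = 0"
          using sum_nonneg_eq_0_iff[of "{\<tau>\<in>A. \<tau> k = t}"] finA Wnn by auto
        hence "\<And>a. interim_cost p c T \<pi> yh k t a = 0"
          unfolding interim_cost_def W_def[symmetric] A_def[symmetric] by simp
        then show ?thesis using P0 by simp
      qed
    qed
    also have "\<dots> = \<gamma> k * \<alpha> * (\<Sum>t\<in>T k. type_prob p T \<pi> k t)"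
      by (simp add: sum_distrib_left mult.assoc)
    finally show "(\<Sum>\<theta>\<in>UNIV. \<Sum>\<tau>\<in>A. \<Sum>a\<in>UNIV. X \<theta> \<tau> a * d k (\<tau> k) a) \<le> \<gamma> k * \<alpha> * (\<Sum>t\<in>T k. type_prob p T \<pi> k t)" .
  qed
  also have "\<dots> = (\<Sum>k\<in>UNIV. \<gamma> k * \<alpha>)"
  proof (rule sum.cong[OF refl])
    fix k
    have "(\<Sum>t\<in>T k. type_prob p T \<pi> k t) = (\<Sum>t\<in>T k. \<Sum>\<theta>\<in>UNIV. \<Sum>\<tau>\<in>{\<tau>\<in>A. \<tau> k = t}. W \<theta> \<tau>)"
      unfolding type_prob_def W_def A_def ..
    also have "\<dots> = (\<Sum>\<theta>\<in>UNIV. \<Sum>t\<in>T k. \<Sum>\<tau>\<in>{\<tau>\<in>A. \<tau> k = t}. W \<theta> \<tau>)"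
      by (rule sum.swap)
    also have "\<dots> = (\<Sum>\<theta>\<in>UNIV. \<Sum>\<tau>\<in>A. W \<theta> \<tau>)"
      by (rule sum.cong[OF refl], rule group_k[OF finA finT Ak, symmetric])
    also have "\<dots> = (\<Sum>\<theta>\<in>UNIV. p \<theta>)"
      unfolding W_def A_def by (simp add: sum_distrib_left[symmetric] psum)
    finally show "\<gamma> k * \<alpha> * (\<Sum>t\<in>T k. type_prob p T \<pi> k t) = \<gamma> k * \<alpha>" by (simp add: p_sum)
  qed
  also have "\<dots> = \<alpha>" by (simp add: sum_distrib_right[symmetric] gsum)
  finally show "Phi_pi p T \<pi> \<Phi> yh \<le> Phi_pi p T \<pi> \<Phi> zh + \<alpha>" by simp
qed

end
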